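(* Let $H$ be an abelian group with an alternating $\mathbb{Z}$-bilinear form $\langle-,-\rangle$, and let $f:H^{(1)}\to\mathbb{Z}$ be a function such that $f(u+v)=f(u)+f(v)$ for all $u,v\in H^{(1)}$ with $\langle u,v\rangle\neq0$. Then $f(u+v)=f(u)+f(v)$ for all $u,v\in H^{(1)}$ with $u+v\in H^{(1)}$, and $f(nu)=nf(u)$ for all $u\in H^{(1)}$ and $n\in\mathbb{Z}\setminus\{0\}$.
   Context: $\mu:H\to\mathrm{Hom}_{\mathbb{Z}}(H,\mathbb{Z})$, $\mu(x)(y)=\langle x,y\rangle$; $H^{(1)}:=H\setminus\ker\mu$. *)

theory Defs
  imports Main
begin

definition zmul :: "int \<Rightarrow> 'a::ab_group_add \<Rightarrow> 'a" where
  "zmul n u = (if 0 \<le> n then (((+) u) ^^ nat n) 0 else - ((((+) u) ^^ nat (- n)) 0))"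

definition alt_bilinear :: "('a::ab_group_add \<Rightarrow> 'a \<Rightarrow> int) \<Rightarrow> bool" where
  "alt_bilinear B \<longleftrightarrow>
     (\<forall>x y z. B (x + y) z = B x z + B y z) \<and>
     (\<forall>x y z. B x (y + z) = B x y + B x z) \<and>
     (\<forall>x. B x x = 0)"

text \<open>H^(1) = H minus ker mu, where mu(x)(y) = B x y.\<close>
definition H1 :: "('a \<Rightarrow> 'a \<Rightarrow> int) \<Rightarrow> 'a set" where
  "H1 B = {x. \<exists>y. B x y \<noteq> 0}"

end

theory Submission
  imports Defs
begin

lemma two_nz:
  fixes a b :: "'a::ab_group_add \<Rightarrow> int"
  assumes ad: "\<And>x y. a (x + y) = a x + a y" and bd: "\<And>x y. b (x + y) = b x + b y"
    and "a x \<noteq> 0" and "b y \<noteq> 0"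
  shows "\<exists>w. a w \<noteq> 0 \<and> b w \<noteq> 0"
proof (cases "b x \<noteq> 0")
  case True then show ?thesis using assms by blast
next
  case False
  show ?thesis
  proof (cases "a y \<noteq> 0")
    case True then show ?thesis using assms by blast
  next
    case F2: False
    have "a (x + y) \<noteq> 0" "b (x + y) \<noteq> 0" using False F2 assms ad bd by auto
    then show ?thesis by blast
  qed
qed

lemma three_nz:
  fixes a b :: "'a::ab_group_add \<Rightarrow> int"
  assumes ad: "\<And>x y. a (x + y) = a x + a y" and bd: "\<And>x y. b (x + y) = b x + b y"
    and "a x \<noteq> 0" and "b y \<noteq> 0" and zc: "a z + b z \<noteq> 0"
  shows "\<exists>w. a w \<noteq> 0 \<and> b w \<noteq> 0 \<and> a w + b w \<noteq> 0"
proof -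
  obtain w where w: "a w \<noteq> 0" "b w \<noteq> 0" using two_nz[OF ad bd assms(3,4)] by blast
  show ?thesis
  proof (cases "a w + b w = 0")
    case False then show ?thesis using w by blast
  next
    case True
    have e1: "a (w + z) = a w + a z" "b (w + z) = b w + b z"
      "a (w + w + z) = a w + a w + a z" "b (w + w + z) = b w + b w + b z"
      using ad bd by simp_all
    have "(a z \<noteq> 0 \<and> b z \<noteq> 0 \<and> a z + b z \<noteq> 0) \<or>
          (a (w+z) \<noteq> 0 \<and> b (w+z) \<noteq> 0 \<and> a (w+z) + b (w+z) \<noteq> 0) \<or>
          (a (w+w+z) \<noteq> 0 \<and> b (w+w+z) \<noteq> 0 \<and> a (w+w+z) + b (w+w+z) \<noteq> 0)"
      unfolding e1 using True w zc by arith
    then show ?thesis by blast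
  qed
qed

theorem lemma5p3:
  fixes B :: "'a::ab_group_add \<Rightarrow> 'a \<Rightarrow> int" and f :: "'a \<Rightarrow> int"
  assumes "alt_bilinear B"
    and "\<And>u v. u \<in> H1 B \<Longrightarrow> v \<in> H1 B \<Longrightarrow> B u v \<noteq> 0 \<Longrightarrow> f (u + v) = f u + f v"
  shows "(\<forall>u v. u \<in> H1 B \<longrightarrow> v \<in> H1 B \<longrightarrow> u + v \<in> H1 B \<longrightarrow> f (u + v) = f u + f v) \<and>
         (\<forall>u n. u \<in> H1 B \<longrightarrow> n \<noteq> 0 \<longrightarrow> f (zmul n u) = n * f u)"
proof -
  have l: "\<And>x y z. B (x + y) z = B x z + B y z" and r: "\<And>x y z. B x (y + z) = B x y + B x z"
    and al: "\<And>x. B x x = 0" using assms(1) unfolding alt_bilinear_def by auto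
  have anti: "B x y = - B y x" for x y
    using al[of "x+y"] l r al[of x] al[of y] by simp
  have l0: "B 0 y = 0" for y using l[of 0 0 y] by simp
  have ln: "B (- x) y = - B x y" for x y using l[of x "-x" y] l0 by simp
  note hyp = assms(2)
  have H1I: "B x y \<noteq> 0 \<Longrightarrow> x \<in> H1 B" for x y unfolding H1_def by blast
  have add: "f (u + v) = f u + f v" if u: "u \<in> H1 B" and v: "v \<in> H1 B" and uv: "u + v \<in> H1 B" for u v
  proof (cases "B u v = 0")
    case False then show ?thesis using hyp u v by blast
  next
    case True
    obtain x where x: "B u x \<noteq> 0" using u unfolding H1_def by blast
    obtain y where y: "B v y \<noteq> 0" using v unfolding H1_def by blast
    obtain z where z: "B (u+v) z \<noteq> 0" using uv unfolding H1_def by blast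
    have "\<exists>w. B u w \<noteq> 0 \<and> B v w \<noteq> 0 \<and> B u w + B v w \<noteq> 0"
      by (rule three_nz[where a="B u" and b="B v", OF r r x y]) (use z l in simp)
    then obtain w where w: "B u w \<noteq> 0" "B v w \<noteq> 0" "B u w + B v w \<noteq> 0" by blast
    have wH: "w \<in> H1 B" using H1I[of w u] anti[of w u] w by simp
    have e1: "f (u + v + w) = f (u + v) + f w" using hyp[OF uv wH] l w by simp
    have vwH: "v + w \<in> H1 B" using H1I[of "v+w" u] l anti[of v u] anti[of w u] True w by simp
    have e2: "f (u + (v + w)) = f u + f (v + w)" using hyp[OF u vwH] r True w by simp
    have e3: "f (v + w) = f v + f w" using hyp[OF v wH] w by simp
    show ?thesis using e1 e2 e3 by (simp add: add.assoc)
  qed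
  have neg: "f (- x) = - f x" if x: "x \<in> H1 B" for x
  proof -
    obtain w where w: "B x w \<noteq> 0" using x unfolding H1_def by blast
    have wH: "w \<in> H1 B" using H1I[of w x] anti[of w x] w by simp
    have nxH: "- x \<in> H1 B" using H1I[of "-x" w] ln w by simp
    have xwH: "x + w \<in> H1 B" using H1I[of "x+w" x] l al anti[of w x] w by simp
    have e1: "f (- x + (x + w)) = f (- x) + f (x + w)" using hyp[OF nxH xwH] ln r al w by simp
    have e2: "f (x + w) = f x + f w" using hyp[OF x wH] w by simp
    show ?thesis using e1 e2 by simp
  qed
  have pB: "B ((((+) u) ^^ m) 0) y = int m * B u y" for u y m
    by (induction m) (simp_all add: l0 l algebra_simps)
  have pos: "f ((((+) u) ^^ m) 0) = int m * f u \<and> (((+) u) ^^ m) 0 \<in> H1 B"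
    if u: "u \<in> H1 B" and m: "m \<ge> 1" for u :: 'a and m :: nat
    using m
  proof (induction rule: dec_induct)
    case base then show ?case using u by simp
  next
    case (step m)
    obtain y where y: "B u y \<noteq> 0" using u unfolding H1_def by blast
    have sH: "(((+) u) ^^ Suc m) 0 \<in> H1 B" using H1I[of _ y] pB[where u=u and m="Suc m" and y=y] y by simp
    have "f (u + (((+) u) ^^ m) 0) = f u + f ((((+) u) ^^ m) 0)"
      using add[OF u conjunct2[OF step.IH]] sH by simp
    then show ?case using step.IH sH by (simp add: distrib_right)
  qed
  have part2: "f (zmul n u) = n * f u" if u: "u \<in> H1 B" and n: "n \<noteq> 0" for u n
  proof (cases "0 \<le> n")
    case True
    then have "nat n \<ge> 1" using n by simp
    then show ?thesis using pos[OF u] True unfolding zmul_def by simp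
  next
    case False
    then have "nat (- n) \<ge> 1" by simp
    then show ?thesis using pos[OF u] neg False unfolding zmul_def by simp
  qed
  show ?thesis using add part2 by blast
qed

end
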